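(* Let $(X,\mathrm{d})$ be a metric space, $P\subseteq X$ finite with $n$ points, $r,\varepsilon>0$, and let $\mathcal{F}$ be an $(r,r_2,p_1,p_2)$-sensitive family of hash functions on $X$ with $r_2\le r(1+\varepsilon)$. For any query point $q\in X$, the output set $S$ of the query procedure of the structure $\mathcal{A}(P,r,\varepsilon)$ (described in the context) satisfies $N_P(q,r)\subseteq S$ with probability at least $1-n^{1-c\ln\frac52}$.
   Context: Notation: $N_P(x,r)$ is the set of points of $P\setminus\{x\}$ at distance at most $r$ from $x$. A family $\mathcal{F}$ of functions $X\to\mathbb{Z}$ with a probability distribution is $(r_1,r_2,p_1,p_2)$-sensitive ($r_1<r_2$, $1>p_1>p_2>0$) if for all $x,y\in X$: $\mathrm{d}(x,y)\le r_1\Rightarrow \Pr[f(x)=f(y)]\ge p_1$ and $\mathrm{d}(x,y)\ge r_2\Rightarrow \Pr[f(x)=f(y)]\le p_2$. Structure $\mathcal{A}(P,r,\varepsilon)$: let $\varrho=\ln p_1/\ln p_2$, $k=\lceil \ln n/\ln(1/p_2)\rceil$, $L=\lceil n^\varrho/p_1\rceil$, and let $\mathcal{G}$ be the family of maps $g=(f_1,\dots,f_k):X\to\mathbb{Z}^k$ whose coordinates are drawn independently from $\mathcal{F}$. For each of $\lceil c\ln n\rceil$ rounds ($c>0$ a fixed constant), independently draw $g_1,\dots,g_L$ from $\mathcal{G}$ and insert every $p\in P$ into hash table $H_j$ under key $g_j(p)$. Query: given $q$, for every round and every $j$, retrieve all points stored in $H_j$ under key $g_j(q)$ and insert each such $p$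 into $S$ iff $\mathrm{d}(q,p)\le r$; return $S$. *)

theory Defs
  imports "HOL-Probability.Probability"
begin

definition nbhd :: "'a::metric_space set \<Rightarrow> 'a \<Rightarrow> real \<Rightarrow> 'a set" where
  "nbhd P x r = {y \<in> P - {x}. dist x y \<le> r}"

definition sensitive ::
  "('a::metric_space \<Rightarrow> int) measure \<Rightarrow> real \<Rightarrow> real \<Rightarrow> real \<Rightarrow> real \<Rightarrow> bool" where
  "sensitive F r1 r2 p1 p2 \<longleftrightarrow>
     prob_space F \<and> r1 < r2 \<and> 0 < p2 \<and> p2 < p1 \<and> p1 < 1 \<and>
     (\<forall>x y. {f \<in> space F. f x = f y} \<in> sets F) \<and>
     (\<forall>x y. dist x y \<le> r1 \<longrightarrow> measure F {f \<in> space F. f x = f y} \<ge> p1) \<and>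
     (\<forall>x y. dist x y \<ge> r2 \<longrightarrow> measure F {f \<in> space F. f x = f y} \<le> p2)"

definition lsh_rho :: "real \<Rightarrow> real \<Rightarrow> real" where
  "lsh_rho p1 p2 = ln p1 / ln p2"

definition lsh_k :: "nat \<Rightarrow> real \<Rightarrow> nat" where
  "lsh_k n p2 = nat \<lceil>ln (real n) / ln (1 / p2)\<rceil>"

definition lsh_L :: "nat \<Rightarrow> real \<Rightarrow> real \<Rightarrow> nat" where
  "lsh_L n p1 p2 = nat \<lceil>real n powr lsh_rho p1 p2 / p1\<rceil>"

definition lsh_rounds :: "real \<Rightarrow> nat \<Rightarrow> nat" where
  "lsh_rounds c n = nat \<lceil>c * ln (real n)\<rceil>"

text \<open>All random choices of the structure: h (i,j,l) is the l-th coordinate f_l of the map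
  g_j of round i (i < rounds, j < L, l < k), all drawn independently from F.\<close>
definition lsh_index :: "nat \<Rightarrow> nat \<Rightarrow> nat \<Rightarrow> (nat \<times> nat \<times> nat) set" where
  "lsh_index R L k = {..<R} \<times> {..<L} \<times> {..<k}"

definition lsh_space ::
  "('a \<Rightarrow> int) measure \<Rightarrow> nat \<Rightarrow> nat \<Rightarrow> nat \<Rightarrow> (nat \<times> nat \<times> nat \<Rightarrow> 'a \<Rightarrow> int) measure" where
  "lsh_space F R L k = PiM (lsh_index R L k) (\<lambda>_. F)"

definition lsh_g :: "nat \<Rightarrow> (nat \<times> nat \<times> nat \<Rightarrow> 'a \<Rightarrow> int) \<Rightarrow> nat \<Rightarrow> nat \<Rightarrow> 'a \<Rightarrow> int list" where
  "lsh_g k h i j x = map (\<lambda>l. h (i, j, l) x) [0..<k]"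

definition bucket :: "'a set \<Rightarrow> ('a \<Rightarrow> 'b) \<Rightarrow> 'b \<Rightarrow> 'a set" where
  "bucket P g key = {p \<in> P. g p = key}"

definition lsh_query ::
  "'a::metric_space set \<Rightarrow> real \<Rightarrow> nat \<Rightarrow> nat \<Rightarrow> nat \<Rightarrow> (nat \<times> nat \<times> nat \<Rightarrow> 'a \<Rightarrow> int) \<Rightarrow> 'a \<Rightarrow> 'a set" where
  "lsh_query P r R L k h q =
     (\<Union>i\<in>{..<R}. \<Union>j\<in>{..<L}. {p \<in> bucket P (lsh_g k h i j) (lsh_g k h i j q). dist q p \<le> r})"

end

theory Submission
  imports Defs
begin


lemma coord_indep:
  assumes F: "prob_space F" and I: "finite I" "I \<noteq> {}"
  shows "prob_space.indep_vars (PiM I (\<lambda>_. F)) (\<lambda>_. F) (\<lambda>i h. h i) I"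
proof -
  interpret P: prob_space "PiM I (\<lambda>_. F)" by (intro prob_space_PiM F)
  show ?thesis
  proof (subst P.indep_vars_iff_distr_eq_PiM')
    show "I \<noteq> {}" by fact
    show "\<And>i. i \<in> I \<Longrightarrow> (\<lambda>h. h i) \<in> measurable (PiM I (\<lambda>_. F)) F" by (rule measurable_component_singleton)
    have "distr (PiM I (\<lambda>_. F)) (PiM I (\<lambda>_. F)) (\<lambda>x. restrict (\<lambda>i. x i) I) = distr (PiM I (\<lambda>_. F)) (PiM I (\<lambda>_. F)) (\<lambda>x. x)"
      by (rule distr_cong) (auto simp: space_PiM)
    also have "\<dots> = PiM I (\<lambda>_. F)" by simp
    also have "\<dots> = PiM I (\<lambda>i. distr (PiM I (\<lambda>_. F)) F (\<lambda>h. h i))"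
      by (rule PiM_cong) (auto simp: distr_PiM_component[OF F])
    finally show "distr (PiM I (\<lambda>_. F)) (PiM I (\<lambda>_. F)) (\<lambda>x. restrict (\<lambda>i. x i) I) = PiM I (\<lambda>i. distr (PiM I (\<lambda>_. F)) F (\<lambda>h. h i))" .
  qed
qed



lemma block_fail:
  fixes F :: "'b measure" and C :: "'b set"
  assumes F: "prob_space F" and C: "C \<in> sets F" and k: "k > 0"
  shows "measure (PiM ({..<R} \<times> {..<L} \<times> {..<k}) (\<lambda>_. F))
     {h \<in> space (PiM ({..<R} \<times> {..<L} \<times> {..<k}) (\<lambda>_. F)). \<forall>i<R. \<forall>j<L. \<exists>l<k. h (i,j,l) \<notin> C}
     = (1 - measure F C ^ k) ^ (R * L)"
proof -
  define Idx where "Idx = {..<R} \<times> {..<L} \<times> {..<k}"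
  define M where "M = PiM Idx (\<lambda>_. F)"
  define B where "B = {..<R} \<times> {..<L}"
  define K where "K = (\<lambda>b::nat\<times>nat. {fst b} \<times> {snd b} \<times> {..<k})"
  define E where "E = (\<lambda>b. space (PiM (K b) (\<lambda>_. F)) - {g \<in> space (PiM (K b) (\<lambda>_. F)). \<forall>x\<in>K b. g x \<in> C})"
  interpret Fp: prob_space F by (rule F)
  interpret P: prob_space M unfolding M_def by (intro prob_space_PiM F)
  interpret PP: product_prob_space "\<lambda>_. F" Idx by (intro product_prob_spaceI F)
  have finIdx: "finite Idx" unfolding Idx_def by auto
  have Csub: "C \<subseteq> space F" using C sets.sets_into_space by auto
  have Kfin: "finite (K b)" for b unfolding K_def by auto
  have cardK: "card (K b) = k" for b unfolding K_def by (simp add: card_cartesian_product)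
  have KI: "K b \<subseteq> Idx" if "b \<in> B" for b using that unfolding K_def Idx_def B_def by auto
  have collect_eq: "{g \<in> space (PiM J (\<lambda>_. F)). \<forall>x\<in>J. g x \<in> C} = PiE J (\<lambda>_. C)" for J
    using Csub by (auto simp: space_PiM PiE_def Pi_def extensional_def)
  have Esets: "E b \<in> sets (PiM (K b) (\<lambda>_. F))" for b
    unfolding E_def collect_eq
    by (intro sets.compl_sets sets_PiM_I_finite Kfin C)
  have prodC: "measure M {h \<in> space M. \<forall>x\<in>J. h x \<in> C} = measure F C ^ card J" if "J \<subseteq> Idx" for J
  proof -
    have fin: "finite J" using that finIdx finite_subset by blast
    have "emeasure M {h \<in> space M. \<forall>x\<in>J. h x \<in> C} = (\<Prod>x\<in>J. emeasure F C)"
      unfolding M_def by (rule PP.emeasure_PiM_Collect[OF that fin C])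
    also have "\<dots> = ennreal (measure F C ^ card J)"
      using Fp.emeasure_eq_measure by (simp add: ennreal_power)
    finally show ?thesis unfolding P.emeasure_eq_measure by (simp add: prob_space.prob_space[OF F] ennreal_inj)
  qed
  show ?thesis
  proof (cases "B = {}")
    case True
    then have "R = 0 \<or> L = 0" unfolding B_def by auto
    then show ?thesis using P.prob_space unfolding M_def Idx_def by auto
  next
    case Bne: False
    have IdxNe: "Idx \<noteq> {}" using Bne k unfolding Idx_def B_def by auto
    have ind0: "P.indep_vars (\<lambda>_. F) (\<lambda>i h. h i) Idx"
      unfolding M_def by (rule coord_indep[OF F finIdx IdxNe])
    have disj: "disjoint_family_on K B" unfolding disjoint_family_on_def K_def by auto
    have ind: "P.indep_vars (\<lambda>b. PiM (K b) (\<lambda>_. F)) (\<lambda>b h. restrict (\<lambda>i. h i) (K b)) B"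
      by (rule P.indep_vars_restrict[OF ind0 KI disj])
    have meas: "(\<lambda>h. restrict (\<lambda>i. h i) (K b)) \<in> measurable M (PiM (K b) (\<lambda>_. F))" if "b \<in> B" for b
      using ind that unfolding P.indep_vars_def by auto
    have pre: "(\<lambda>h. restrict (\<lambda>i. h i) (K b)) -` E b \<inter> space M = space M - {h \<in> space M. \<forall>x\<in>K b. h x \<in> C}"
      if "b \<in> B" for b
      using measurable_space[OF meas[OF that]] unfolding E_def by auto
    have set_eq: "{h \<in> space M. \<forall>i<R. \<forall>j<L. \<exists>l<k. h (i,j,l) \<notin> C}
        = (\<Inter>b\<in>B. (\<lambda>h. restrict (\<lambda>i. h i) (K b)) -` E b \<inter> space M)"
    proof -
      have "(\<Inter>b\<in>B. (\<lambda>h. restrict (\<lambda>i. h i) (K b)) -` E b \<inter> space M)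
          = (\<Inter>b\<in>B. space M - {h \<in> space M. \<forall>x\<in>K b. h x \<in> C})"
        using pre by simp
      also have "\<dots> = {h \<in> space M. \<forall>i<R. \<forall>j<L. \<exists>l<k. h (i,j,l) \<notin> C}"
        using Bne by (auto simp: B_def K_def) blast+
      finally show ?thesis by simp
    qed
    have "measure M {h \<in> space M. \<forall>i<R. \<forall>j<L. \<exists>l<k. h (i,j,l) \<notin> C}
        = (\<Prod>b\<in>B. measure M ((\<lambda>h. restrict (\<lambda>i. h i) (K b)) -` E b \<inter> space M))"
      unfolding set_eq
      by (rule P.indep_varsD_finite[OF ind Bne]) (auto simp: B_def Esets)
    also have "\<dots> = (\<Prod>b\<in>B. 1 - measure F C ^ k)"
    proof (rule prod.cong[OF refl])
      fix b assume b: "b \<in> B"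
      have s: "{h \<in> space M. \<forall>x\<in>K b. h x \<in> C} \<in> P.events"
      proof -
        have "{h \<in> space M. \<forall>x\<in>K b. h x \<in> C} = (\<lambda>h. restrict (\<lambda>i. h i) (K b)) -` PiE (K b) (\<lambda>_. C) \<inter> space M"
          using measurable_space[OF meas[OF b]] by (auto simp: space_PiM PiE_def Pi_def)
        also have "\<dots> \<in> P.events"
          by (intro measurable_sets[OF meas[OF b]] sets_PiM_I_finite Kfin C)
        finally show ?thesis .
      qed
      show "measure M ((\<lambda>h. restrict (\<lambda>i. h i) (K b)) -` E b \<inter> space M) = 1 - measure F C ^ k"
        unfolding pre[OF b] using P.prob_compl[OF s] prodC[OF KI[OF b]] cardK by simp
    qed
    also have "\<dots> = (1 - measure F C ^ k) ^ (R * L)"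
      by (simp add: B_def card_cartesian_product)
    finally show ?thesis unfolding M_def Idx_def .
  qed
qed



lemma numeric:
  fixes n :: nat and p1 p2 c \<mu> :: real
  assumes n: "n \<ge> 2" and p: "0 < p2" "p2 < p1" "p1 < 1" and c: "c > 0"
    and mu: "p1 \<le> \<mu>" "\<mu> \<le> 1"
  shows "(1 - \<mu> ^ lsh_k n p2) ^ (lsh_rounds c n * lsh_L n p1 p2) \<le> real n powr (-c)"
proof -
  define k where "k = lsh_k n p2"
  define L where "L = lsh_L n p1 p2"
  define R where "R = lsh_rounds c n"
  define t where "t = ln (real n) / ln (1/p2)"
  define rho where "rho = ln p1 / ln p2"
  have lnn: "ln (real n) > 0" using n by simp
  have lnp2: "ln (1/p2) > 0" using p by (simp add: ln_div)
  have t: "t > 0" unfolding t_def using lnn lnp2 by simp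
  have kle: "real k \<le> t + 1" unfolding k_def lsh_k_def t_def[symmetric] using t by (simp add: of_nat_nat)
  have p1pos: "p1 > 0" using p by simp
  have "p1 ^ k = p1 powr real k" using p1pos by (simp add: powr_realpow)
  also have "\<dots> \<ge> p1 powr (t + 1)" using kle p1pos p by (intro powr_mono') auto
  finally have pk: "p1 powr (t+1) \<le> p1 ^ k" .
  have "p1 powr t = exp (ln p1 * t)" using p1pos by (simp add: powr_def)
  also have "ln p1 * t = - rho * ln (real n)"
    unfolding t_def rho_def using p by (simp add: ln_div field_simps)
  also have "exp (- rho * ln (real n)) = real n powr (- rho)" using n by (simp add: powr_def)
  finally have "p1 powr (t+1) = p1 * real n powr (- rho)" using p1pos by (simp add: powr_add)
  with pk have pk2: "p1 * real n powr (- rho) \<le> p1 ^ k" by simp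
  have npos: "real n powr rho > 0" using n by simp
  have Lge: "real L \<ge> real n powr rho / p1" unfolding L_def lsh_L_def lsh_rho_def rho_def[symmetric] by (metis of_nat_ceiling)
  have Lpos: "real L > 0" using Lge npos p1pos by (smt (verit) divide_pos_pos)
  have "1 / real L \<le> 1 / (real n powr rho / p1)"
    using Lge npos p1pos Lpos by (intro divide_left_mono) (auto intro!: mult_pos_pos divide_pos_pos)
  also have "\<dots> = p1 * real n powr (- rho)" using npos by (simp add: powr_minus field_simps)
  finally have invL: "1 / real L \<le> p1 ^ k" using pk2 by simp
  have "p1 ^ k \<le> \<mu> ^ k" using mu p1pos by (intro power_mono) auto
  with invL have a: "1 - \<mu> ^ k \<le> 1 - 1 / real L" by simp
  have a0: "0 \<le> 1 - \<mu> ^ k" using mu p1pos by (simp add: power_le_one)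
  have "(1 - \<mu> ^ k) ^ (R * L) \<le> (1 - 1 / real L) ^ (R * L)"
    using a a0 by (intro power_mono) auto
  also have "\<dots> \<le> exp (- 1 / real L) ^ (R * L)"
  proof (intro power_mono)
    show "1 - 1 / real L \<le> exp (- 1 / real L)" using exp_ge_add_one_self[of "-1/real L"] by simp
    show "0 \<le> 1 - 1 / real L" using Lpos by (simp add: field_simps)
  qed
  also have "\<dots> = exp (- 1 / real L * real (R * L))" by (simp add: exp_of_nat_mult[symmetric] mult.commute)
  also have "- 1 / real L * real (R * L) = - real R" using Lpos by (simp add: field_simps)
  also have "exp (- real R) \<le> exp (- (c * ln (real n)))"
    unfolding R_def lsh_rounds_def by simp linarith
  also have "\<dots> = real n powr (-c)" using n by (simp add: powr_def)
  finally show ?thesis unfolding k_def R_def L_def .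
qed



theorem lemma1:
  fixes P :: "'a::metric_space set" and F :: "('a \<Rightarrow> int) measure"
    and r eps r2 p1 p2 c :: real and q :: 'a
  assumes "finite P"
    and "r > 0" and "eps > 0" and "c > 0"
    and "sensitive F r r2 p1 p2"
    and "r2 \<le> r * (1 + eps)"
  shows "measure (lsh_space F (lsh_rounds c (card P)) (lsh_L (card P) p1 p2) (lsh_k (card P) p2))
           {h \<in> space (lsh_space F (lsh_rounds c (card P)) (lsh_L (card P) p1 p2) (lsh_k (card P) p2)).
              nbhd P q r \<subseteq> lsh_query P r (lsh_rounds c (card P)) (lsh_L (card P) p1 p2)
                                 (lsh_k (card P) p2) h q}
         \<ge> 1 - real (card P) powr (1 - c * ln (5/2))"
proof -
  define n where "n = card P"
  define R where "R = lsh_rounds c n"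
  define L where "L = lsh_L n p1 p2"
  define k where "k = lsh_k n p2"
  define Idx where "Idx = {..<R} \<times> {..<L} \<times> {..<k}"
  define M where "M = PiM Idx (\<lambda>_. F)"
  have sens: "prob_space F" "0 < p2" "p2 < p1" "p1 < 1"
    "\<And>x y. {f \<in> space F. f x = f y} \<in> sets F"
    "\<And>x y. dist x y \<le> r \<Longrightarrow> measure F {f \<in> space F. f x = f y} \<ge> p1"
    using assms(5) unfolding sensitive_def by auto
  interpret Fp: prob_space F by (rule sens(1))
  interpret Pm: prob_space M unfolding M_def by (intro prob_space_PiM sens(1))
  have Mdef: "lsh_space F R L k = M" unfolding M_def Idx_def lsh_space_def lsh_index_def ..
  define Good where "Good = {h \<in> space M. nbhd P q r \<subseteq> lsh_query P r R L k h q}"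
  define C where "C = (\<lambda>p. {f \<in> space F. f q = f p})"
  define Fail where "Fail = (\<lambda>p. {h \<in> space M. \<forall>i<R. \<forall>j<L. \<exists>l<k. h (i,j,l) \<notin> C p})"
  have hsp: "h (i,j,l) \<in> space F" if "h \<in> space M" "i < R" "j < L" "l < k" for h i j l
    using that unfolding M_def Idx_def by (auto simp: space_PiM)
  have Fail_sets: "Fail p \<in> sets M" for p
  proof -
    have base: "{h\<in>space M. h x \<in> A} \<in> sets M" if "x\<in>Idx" "A\<in>sets F" for x A
    proof -
      have "{h\<in>space M. h x \<in> A} = (\<lambda>h. h x) -` A \<inter> space M" by auto
      also have "\<dots> \<in> sets M" unfolding M_def
        by (rule measurable_sets[OF measurable_component_singleton[OF that(1)] that(2)])
      finally show ?thesis .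
    qed
    have "Fail p = {h\<in>space M. \<forall>i\<in>{..<R}. \<forall>j\<in>{..<L}. \<exists>l\<in>{..<k}. h (i,j,l) \<in> space F - C p}"
      using hsp unfolding Fail_def by auto blast+
    also have "\<dots> \<in> sets M"
      by (intro sets.sets_Collect_finite_All sets.sets_Collect_finite_Ex base)
         (auto simp: Idx_def C_def sens(5))
    finally show ?thesis .
  qed
  have goal_eq: "?thesis \<longleftrightarrow> 1 - real n powr (1 - c * ln (5/2)) \<le> measure M Good"
    unfolding Good_def n_def R_def L_def k_def Mdef[unfolded R_def L_def k_def n_def] ..
  have nbP: "nbhd P q r \<subseteq> P" unfolding nbhd_def by auto
  have finnb: "finite (nbhd P q r)" using nbP assms(1) finite_subset by blast
  show ?thesis
  proof (cases "n \<le> 1")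
    case True
    show ?thesis
    proof (cases "n = 0")
      case True
      then have "P = {}" using assms(1) n_def by simp
      then have "Good = space M" unfolding Good_def nbhd_def by auto
      then show ?thesis using goal_eq True Pm.prob_space by simp
    next
      case False
      with \<open>n \<le> 1\<close> have "n = 1" by simp
      then show ?thesis using goal_eq by simp
    qed
  next
    case False
    then have n2: "n \<ge> 2" by simp
    have lnn: "ln (real n) > 0" using n2 by simp
    have lnp2: "ln (1/p2) > 0" using sens by (simp add: ln_div)
    have kpos: "k > 0" unfolding k_def lsh_k_def using lnn lnp2 by simp
    have mem_iff: "p \<in> lsh_query P r R L k h q \<longleftrightarrow> h \<notin> Fail p"
      if h: "h \<in> space M" and p: "p \<in> nbhd P q r" for h p
    proof -
      have pP: "p \<in> P" and dpq: "dist q p \<le> r" using p unfolding nbhd_def by auto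
      have "p \<in> lsh_query P r R L k h q \<longleftrightarrow> (\<exists>i<R. \<exists>j<L. \<forall>l<k. h (i,j,l) p = h (i,j,l) q)"
        using pP dpq unfolding lsh_query_def bucket_def lsh_g_def by (auto simp: atLeast0LessThan)
      also have "\<dots> \<longleftrightarrow> h \<notin> Fail p"
        using hsp[OF h] h unfolding Fail_def C_def by auto metis+
      finally show ?thesis .
    qed
    have Good_eq: "Good = space M - (\<Union>p\<in>nbhd P q r. Fail p)"
      unfolding Good_def using mem_iff by blast
    have U: "(\<Union>p\<in>nbhd P q r. Fail p) \<in> sets M"
      using finnb Fail_sets by auto
    have each: "measure M (Fail p) \<le> real n powr (-c)" if p: "p \<in> nbhd P q r" for p
    proof -
      have dpq: "dist q p \<le> r" using p unfolding nbhd_def by auto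
      have "measure M (Fail p) = (1 - measure F (C p) ^ k) ^ (R * L)"
        unfolding Fail_def M_def Idx_def
        by (rule block_fail[OF sens(1) _ kpos]) (simp add: C_def sens(5))
      also have "\<dots> \<le> real n powr (-c)"
        unfolding k_def R_def L_def
        by (rule numeric[OF n2 sens(2,3,4) assms(4)])
           (use sens(6)[OF dpq] in \<open>auto simp: C_def\<close>)
      finally show ?thesis .
    qed
    have "measure M (\<Union>p\<in>nbhd P q r. Fail p) \<le> (\<Sum>p\<in>nbhd P q r. measure M (Fail p))"
      using finnb Fail_sets by (intro Pm.finite_measure_subadditive_finite) auto
    also have "\<dots> \<le> (\<Sum>p\<in>nbhd P q r. real n powr (-c))"
      by (intro sum_mono each)
    also have "\<dots> = real (card (nbhd P q r)) * real n powr (-c)" by simp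
    also have "\<dots> \<le> real n * real n powr (-c)"
      using card_mono[OF assms(1) nbP] unfolding n_def by (intro mult_right_mono) auto
    also have "\<dots> = real n powr (1 - c)"
      using n2 by (simp add: powr_diff powr_minus field_simps)
    also have "\<dots> \<le> real n powr (1 - c * ln (5/2))"
    proof (rule powr_mono)
      have "(5/2::real) \<le> exp 1" using exp_lower_Taylor_quadratic[of 1] by simp
      then have "ln (5/2::real) \<le> 1" by (metis ln_exp ln_le_cancel_iff exp_gt_zero zero_less_divide_iff zero_less_numeral)
      then show "1 - c \<le> 1 - c * ln (5/2)" using assms(4) by (simp add: mult_left_le)
      show "1 \<le> real n" using n2 by simp
    qed
    finally have bad: "measure M (\<Union>p\<in>nbhd P q r. Fail p) \<le> real n powr (1 - c * ln (5/2))" .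
    have "measure M Good = 1 - measure M (\<Union>p\<in>nbhd P q r. Fail p)"
      unfolding Good_eq by (rule Pm.prob_compl[OF U])
    with bad goal_eq show ?thesis by simp
  qed
qed

end
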